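(* Let $(A,\cdot,\circ)$ be a skew brace such that $A = B\cdot C$ (i.e. every element of $A$ is of the form $bc$ with $b\in B$, $c\in C$) for some sub-skew braces $B$ and $C$ satisfying all of the following: (1) $B$ and $C$ are trivial skew braces; (2) $B$ and $C$ are normal subgroups of $(A,\cdot)$; (3) $B$ and $C$ are left ideals in $A$. Then $A^{(3)} := A'*A = 1$, where $A'=A*A$; that is, $A$ is right nilpotent of index at most $3$.
   Context: A skew brace is a set $A$ with two group operations $\cdot$ (often written by juxtaposition) and $\circ$ such that $a\circ(bc) = (a\circ b)\,a^{-1}\,(a\circ c)$ for all $a,b,c\in A$. The two groups have the same identity $1$; $a^{-1}$ denotes the inverse of $a$ in $(A,\cdot)$ and $\overline{a}$ its inverse in $(A,\circ)$. Define $a*b = a^{-1}(a\circ b)b^{-1}$. For subsets $X,Y\subseteq A$, $X*Y$ denotes the subgroup of $(A,\cdot)$ generated by all $x*y$ with $x\in X$, $y\in Y$. A sub-skew brace is a subset that is a subgroup of both $(A,\cdot)$ and $(A,\circ)$. A skew brace (or sub-skew brace) $B$ is trivial if $a\circ b = ab$ for all $a,b\in B$. A subgroup $I$ of $(A,\cdot)$ is a left ideal in $A$ if $A*I\subseteq I$, and a right ideal in $A$ if $I*A\subseteq I$. *)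

theory Defs
  imports "HOL-Algebra.Algebra"
begin

definition circ_group :: "('a, 'b) monoid_scheme \<Rightarrow> ('a \<Rightarrow> 'a \<Rightarrow> 'a) \<Rightarrow> ('a, 'b) monoid_scheme" where
  "circ_group G circ = G\<lparr>mult := circ\<rparr>"

definition skew_brace :: "('a, 'b) monoid_scheme \<Rightarrow> ('a \<Rightarrow> 'a \<Rightarrow> 'a) \<Rightarrow> bool" where
  "skew_brace G circ \<longleftrightarrow> group G \<and> group (circ_group G circ) \<and>
     (\<forall>a\<in>carrier G. \<forall>b\<in>carrier G. \<forall>c\<in>carrier G.
        circ a (b \<otimes>\<^bsub>G\<^esub> c) = circ a b \<otimes>\<^bsub>G\<^esub> inv\<^bsub>G\<^esub> a \<otimes>\<^bsub>G\<^esub> circ a c)"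

definition sb_star :: "('a, 'b) monoid_scheme \<Rightarrow> ('a \<Rightarrow> 'a \<Rightarrow> 'a) \<Rightarrow> 'a \<Rightarrow> 'a \<Rightarrow> 'a" where
  "sb_star G circ a b = inv\<^bsub>G\<^esub> a \<otimes>\<^bsub>G\<^esub> circ a b \<otimes>\<^bsub>G\<^esub> inv\<^bsub>G\<^esub> b"

definition sb_star_set :: "('a, 'b) monoid_scheme \<Rightarrow> ('a \<Rightarrow> 'a \<Rightarrow> 'a) \<Rightarrow> 'a set \<Rightarrow> 'a set \<Rightarrow> 'a set" where
  "sb_star_set G circ S T = generate G {sb_star G circ s t | s t. s \<in> S \<and> t \<in> T}"

definition sub_skew_brace :: "('a, 'b) monoid_scheme \<Rightarrow> ('a \<Rightarrow> 'a \<Rightarrow> 'a) \<Rightarrow> 'a set \<Rightarrow> bool" where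
  "sub_skew_brace G circ B \<longleftrightarrow> subgroup B G \<and> subgroup B (circ_group G circ)"

definition trivial_on :: "('a, 'b) monoid_scheme \<Rightarrow> ('a \<Rightarrow> 'a \<Rightarrow> 'a) \<Rightarrow> 'a set \<Rightarrow> bool" where
  "trivial_on G circ B \<longleftrightarrow> (\<forall>a\<in>B. \<forall>b\<in>B. circ a b = a \<otimes>\<^bsub>G\<^esub> b)"

definition left_ideal :: "('a, 'b) monoid_scheme \<Rightarrow> ('a \<Rightarrow> 'a \<Rightarrow> 'a) \<Rightarrow> 'a set \<Rightarrow> bool" where
  "left_ideal G circ I \<longleftrightarrow> subgroup I G \<and> sb_star_set G circ (carrier G) I \<subseteq> I"

end

theory Submission
  imports Defs
begin

locale SB = group G for G (structure) +
  fixes circ :: "'a \<Rightarrow> 'a \<Rightarrow> 'a" and B C :: "'a set"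
  assumes sk: "skew_brace G circ"
    and sB: "sub_skew_brace G circ B" and sC: "sub_skew_brace G circ C"
    and car: "carrier G = {b \<otimes> c | b c. b \<in> B \<and> c \<in> C}"
    and tB: "trivial_on G circ B" and tC: "trivial_on G circ C"
    and nB: "B \<lhd> G" and nC: "C \<lhd> G"
    and lB: "left_ideal G circ B" and lC: "left_ideal G circ C"
begin

definition lam where "lam a y = inv a \<otimes> circ a y"
definition ci where "ci a = inv\<^bsub>circ_group G circ\<^esub> a"

lemma Hgrp: "group (circ_group G circ)" using sk by (simp add: skew_brace_def)

lemma Hcar[simp]: "carrier (circ_group G circ) = carrier G"
  and Hone[simp]: "\<one>\<^bsub>circ_group G circ\<^esub> = \<one>"
  and Hmult[simp]: "x \<otimes>\<^bsub>circ_group G circ\<^esub> y = circ x y"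
  by (simp_all add: circ_group_def)

lemma circ_closed[simp]: "x \<in> carrier G \<Longrightarrow> y \<in> carrier G \<Longrightarrow> circ x y \<in> carrier G"
  using group.is_monoid[OF Hgrp] monoid.m_closed by fastforce

lemma circ_assoc: "x \<in> carrier G \<Longrightarrow> y \<in> carrier G \<Longrightarrow> z \<in> carrier G \<Longrightarrow> circ (circ x y) z = circ x (circ y z)"
  using group.is_monoid[OF Hgrp] monoid.m_assoc by fastforce

lemma circ_one[simp]: "x \<in> carrier G \<Longrightarrow> circ \<one> x = x"
  using group.is_monoid[OF Hgrp] monoid.l_one by fastforce

lemma ci_closed[simp]: "x \<in> carrier G \<Longrightarrow> ci x \<in> carrier G"
  unfolding ci_def using group.inv_closed[OF Hgrp] by fastforce

lemma circ_ci[simp]: "x \<in> carrier G \<Longrightarrow> circ x (ci x) = \<one>"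
  unfolding ci_def using group.r_inv[OF Hgrp] by fastforce

lemma compat: "a \<in> carrier G \<Longrightarrow> b \<in> carrier G \<Longrightarrow> c \<in> carrier G \<Longrightarrow>
  circ a (b \<otimes> c) = circ a b \<otimes> inv a \<otimes> circ a c"
  using sk by (simp add: skew_brace_def)

lemma lam_closed[simp]: "a \<in> carrier G \<Longrightarrow> y \<in> carrier G \<Longrightarrow> lam a y \<in> carrier G"
  by (simp add: lam_def)

lemma circ_lam: "a \<in> carrier G \<Longrightarrow> y \<in> carrier G \<Longrightarrow> circ a y = a \<otimes> lam a y"
  by (simp add: lam_def m_assoc[symmetric])

lemma lam_mult: "a \<in> carrier G \<Longrightarrow> y \<in> carrier G \<Longrightarrow> z \<in> carrier G \<Longrightarrow>
  lam a (y \<otimes> z) = lam a y \<otimes> lam a z"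
  by (simp add: lam_def compat m_assoc)

lemma lam_one_arg[simp]: "a \<in> carrier G \<Longrightarrow> lam a \<one> = \<one>"
proof -
  assume a: "a \<in> carrier G"
  have "lam a \<one> \<otimes> lam a \<one> = lam a \<one> \<otimes> \<one>" using lam_mult[OF a, of \<one> \<one>] a by simp
  then show ?thesis using a by (metis l_cancel one_closed lam_closed)
qed

lemma lam_inv: "a \<in> carrier G \<Longrightarrow> y \<in> carrier G \<Longrightarrow> lam a (inv y) = inv (lam a y)"
proof -
  assume a: "a \<in> carrier G" and y: "y \<in> carrier G"
  have "lam a y \<otimes> lam a (inv y) = \<one>" using lam_mult[OF a y, of "inv y"] a y by simp
  then have "lam a (inv y) \<otimes> lam a y = \<one>" using a y by (simp add: inv_comm)
  then show ?thesis using a y by (simp add: inv_equality)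
qed

lemma lam_one[simp]: "y \<in> carrier G \<Longrightarrow> lam \<one> y = y"
  by (simp add: lam_def)

lemma lam_comp: "a \<in> carrier G \<Longrightarrow> b \<in> carrier G \<Longrightarrow> y \<in> carrier G \<Longrightarrow>
  lam (circ a b) y = lam a (lam b y)"
proof -
  assume a: "a \<in> carrier G" and b: "b \<in> carrier G" and y: "y \<in> carrier G"
  have "circ (circ a b) y = circ a (b \<otimes> lam b y)" using a b y by (simp add: circ_assoc circ_lam[of b y])
  also have "\<dots> = circ a b \<otimes> (inv a \<otimes> circ a (lam b y))" using a b y
    by (simp add: compat m_assoc)
  also have "\<dots> = circ a b \<otimes> lam a (lam b y)" by (simp add: lam_def[of a "lam b y"])
  finally have "circ (circ a b) y = circ a b \<otimes> lam a (lam b y)" .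
  then show ?thesis using a b y by (simp add: lam_def[of "circ a b" y] m_assoc[symmetric])
qed

lemma circ_ci_lam: "x \<in> carrier G \<Longrightarrow> y \<in> carrier G \<Longrightarrow> circ x (lam (ci x) y) = x \<otimes> y"
  using circ_lam[of x "lam (ci x) y"] lam_comp[of x "ci x" y] by simp

lemma BG: "B \<subseteq> carrier G" using nB by (simp add: normal_def subgroup.subset)
lemma CG: "C \<subseteq> carrier G" using nC by (simp add: normal_def subgroup.subset)
lemma subB: "subgroup B G" using nB by (simp add: normal_def)
lemma subC: "subgroup C G" using nC by (simp add: normal_def)

lemma lamB: "a \<in> carrier G \<Longrightarrow> b \<in> B \<Longrightarrow> lam a b \<in> B"
proof -
  assume a: "a \<in> carrier G" and b: "b \<in> B"
  have "sb_star G circ a b \<in> B" using lB a b unfolding left_ideal_def sb_star_set_def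
    by (blast intro: generate.incl)
  moreover have "lam a b = sb_star G circ a b \<otimes> b" using a b BG
    by (auto simp: sb_star_def lam_def m_assoc)
  ultimately show ?thesis using b subgroup.m_closed[OF subB] by simp
qed

lemma lamC: "a \<in> carrier G \<Longrightarrow> c \<in> C \<Longrightarrow> lam a c \<in> C"
proof -
  assume a: "a \<in> carrier G" and b: "c \<in> C"
  have "sb_star G circ a c \<in> C" using lC a b unfolding left_ideal_def sb_star_set_def
    by (blast intro: generate.incl)
  moreover have "lam a c = sb_star G circ a c \<otimes> c" using a b CG
    by (auto simp: sb_star_def lam_def m_assoc)
  ultimately show ?thesis using b subgroup.m_closed[OF subC] by simp
qed

lemma trivB: "b \<in> B \<Longrightarrow> b' \<in> B \<Longrightarrow> circ b b' = b \<otimes> b'"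
  using tB by (simp add: trivial_on_def)
lemma trivC: "b \<in> C \<Longrightarrow> b' \<in> C \<Longrightarrow> circ b b' = b \<otimes> b'"
  using tC by (simp add: trivial_on_def)

lemma lam_trivB: "b \<in> B \<Longrightarrow> b' \<in> B \<Longrightarrow> lam b b' = b'"
  using BG by (simp add: lam_def trivB m_assoc[symmetric] subsetD)
lemma lam_trivC: "b \<in> C \<Longrightarrow> b' \<in> C \<Longrightarrow> lam b b' = b'"
  using CG by (simp add: lam_def trivC m_assoc[symmetric] subsetD)

lemma swap: "SB G circ C B"
proof -
  have "carrier G = {c \<otimes> b | c b. c \<in> C \<and> b \<in> B}"
  proof
    show "carrier G \<subseteq> {c \<otimes> b | c b. c \<in> C \<and> b \<in> B}"
    proof
      fix x assume "x \<in> carrier G"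
      then obtain b c where bc: "b \<in> B" "c \<in> C" "x = b \<otimes> c" using car by auto
      have "inv c \<otimes> b \<otimes> c \<in> B" using nB bc
        by (metis CG inv_inv normal_inv_iff subgroup.mem_carrier subC subgroup.m_inv_closed subsetD)
      moreover have "x = c \<otimes> (inv c \<otimes> b \<otimes> c)" using bc BG CG
        by (auto simp: m_assoc[symmetric] subsetD)
      ultimately show "x \<in> {c \<otimes> b | c b. c \<in> C \<and> b \<in> B}" using bc by blast
    qed
  next
    show "{c \<otimes> b | c b. c \<in> C \<and> b \<in> B} \<subseteq> carrier G"
    proof
      fix x assume "x \<in> {c \<otimes> b | c b. c \<in> C \<and> b \<in> B}"
      then obtain c b where "c \<in> C" "b \<in> B" "x = c \<otimes> b" by blast
      then show "x \<in> carrier G" using BG CG by (metis m_closed subsetD)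
    qed
  qed
  then show ?thesis
    by (intro SB.intro SB_axioms.intro is_group sk sB sC tB tC nB nC lB lC)
qed


lemma comm_in: "XX \<lhd> G \<Longrightarrow> YY \<lhd> G \<Longrightarrow> g \<in> XX \<Longrightarrow> h \<in> YY \<Longrightarrow> inv g \<otimes> h \<otimes> g \<otimes> inv h \<in> XX \<inter> YY"
proof -
  assume XX: "XX \<lhd> G" and YY: "YY \<lhd> G" and g: "g \<in> XX" and h: "h \<in> YY"
  have sXX: "subgroup XX G" and sYY: "subgroup YY G" using XX YY by (simp_all add: normal_def)
  have gc: "g \<in> carrier G" and hc: "h \<in> carrier G" using subgroup.mem_carrier[OF sXX g] subgroup.mem_carrier[OF sYY h] by auto
  have "h \<otimes> g \<otimes> inv h \<in> XX" using normal.inv_op_closed2[OF XX hc g] .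
  then have "inv g \<otimes> (h \<otimes> g \<otimes> inv h) \<in> XX" using subgroup.m_closed[OF sXX subgroup.m_inv_closed[OF sXX g]] by blast
  moreover have "inv g \<otimes> h \<otimes> g \<in> YY" using normal.inv_op_closed1[OF YY gc h] .
  then have "inv g \<otimes> h \<otimes> g \<otimes> inv h \<in> YY" using subgroup.m_closed[OF sYY _ subgroup.m_inv_closed[OF sYY h]] by blast
  ultimately show ?thesis using gc hc by (simp add: m_assoc)
qed

lemma cancel1: "x \<in> carrier G \<Longrightarrow> y \<in> carrier G \<Longrightarrow> x \<otimes> (inv x \<otimes> y) = y"
  by (simp add: m_assoc[symmetric])
lemma cancel2: "x \<in> carrier G \<Longrightarrow> y \<in> carrier G \<Longrightarrow> inv x \<otimes> (x \<otimes> y) = y"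
  by (simp add: m_assoc[symmetric])

definition K where "K = {z \<in> carrier G. \<forall>y\<in>carrier G. lam z y = y}"

lemma K_circ: "z \<in> K \<Longrightarrow> y \<in> carrier G \<Longrightarrow> circ z y = z \<otimes> y"
  by (simp add: K_def circ_lam)

lemma K_lam: "z \<in> K \<Longrightarrow> y \<in> carrier G \<Longrightarrow> lam z y = y"
  by (simp add: K_def)

lemma K_sub: "subgroup K G"
proof (rule subgroupI)
  show "K \<subseteq> carrier G" by (auto simp: K_def)
  show "K \<noteq> {}" by (auto simp: K_def intro!: exI[of _ \<one>])
next
  fix a assume a: "a \<in> K"
  hence ac: "a \<in> carrier G" by (simp add: K_def)
  have "circ a (inv a) = \<one>" using K_circ[OF a] ac by simp
  { fix y assume y: "y \<in> carrier G"
    have "lam (inv a) y = lam a (lam (inv a) y)" using K_lam[OF a] y ac by simp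
    also have "\<dots> = lam (circ a (inv a)) y" using lam_comp ac y by simp
    also have "\<dots> = y" using \<open>circ a (inv a) = \<one>\<close> y by simp
    finally have "lam (inv a) y = y" . }
  then show "inv a \<in> K" using ac by (simp add: K_def)
next
  fix a b assume a: "a \<in> K" and b: "b \<in> K"
  hence ac: "a \<in> carrier G" and bc: "b \<in> carrier G" by (simp_all add: K_def)
  have e: "a \<otimes> b = circ a b" using K_circ[OF a bc] by simp
  { fix y assume y: "y \<in> carrier G"
    have "lam (a \<otimes> b) y = y" unfolding e using lam_comp ac bc y K_lam a b by simp }
  then show "a \<otimes> b \<in> K" using ac bc by (simp add: K_def)
qed

lemma N_K: "z \<in> B \<Longrightarrow> z \<in> C \<Longrightarrow> z \<in> K"
proof -
  assume zB: "z \<in> B" and zC: "z \<in> C"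
  have zc: "z \<in> carrier G" using zB BG by auto
  { fix y assume "y \<in> carrier G"
    then obtain b c where bc: "b \<in> B" "c \<in> C" "y = b \<otimes> c" using car by auto
    have "lam z y = lam z b \<otimes> lam z c" using bc zc BG CG lam_mult by (simp add: subsetD)
    also have "\<dots> = y" using bc zB zC lam_trivB lam_trivC by simp
    finally have "lam z y = y" . }
  then show ?thesis using zc by (simp add: K_def)
qed

lemma claimP: "c \<in> C \<Longrightarrow> b \<in> B \<Longrightarrow> c0 \<in> C \<Longrightarrow> lam (lam c b) c0 = lam b c0"
proof -
  assume c: "c \<in> C" and b: "b \<in> B" and c0: "c0 \<in> C"
  have cc: "c \<in> carrier G" and bcar: "b \<in> carrier G" and c0c: "c0 \<in> carrier G" using c b c0 BG CG by auto
  define b2 where "b2 = lam c b"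
  have b2: "b2 \<in> B" using lamB cc b by (simp add: b2_def)
  have b2c: "b2 \<in> carrier G" using b2 BG by auto
  define b3 where "b3 = c \<otimes> b2 \<otimes> inv c"
  have b3: "b3 \<in> B" unfolding b3_def using normal.inv_op_closed2[OF nB cc b2] .
  have b3c: "b3 \<in> carrier G" using b3 BG by auto
  have "lam (circ c b) c0 = lam c (lam b c0)" using lam_comp cc bcar c0c by simp
  also have "\<dots> = lam b c0" using lam_trivC c lamC bcar c0 by simp
  finally have e1: "lam (circ c b) c0 = lam b c0" .
  define ww where "ww = lam (ci b3) c"
  have ww: "ww \<in> C" unfolding ww_def using lamC c b3c by simp
  have wc: "ww \<in> carrier G" using ww CG by auto
  have "circ c b = c \<otimes> b2" using circ_lam cc bcar by (simp add: b2_def)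
  also have "\<dots> = b3 \<otimes> c" using cc b2c by (simp add: b3_def m_assoc)
  also have "\<dots> = circ b3 ww" using circ_ci_lam b3c cc by (simp add: ww_def)
  finally have e2: "circ c b = circ b3 ww" .
  have "lam (circ b3 ww) c0 = lam b3 (lam ww c0)" using lam_comp b3c wc c0c by simp
  also have "\<dots> = lam b3 c0" using lam_trivC ww c0 by simp
  finally have e3: "lam (circ c b) c0 = lam b3 c0" using e2 by simp
  define n where "n = inv b2 \<otimes> c \<otimes> b2 \<otimes> inv c"
  have n: "n \<in> B \<inter> C" unfolding n_def using comm_in[OF nB nC b2 c] .
  have nK: "n \<in> K" using n N_K by auto
  have nc: "n \<in> carrier G" using n BG by auto
  have "b3 = b2 \<otimes> n" using b2c cc by (simp add: b3_def n_def m_assoc[symmetric])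
  also have "\<dots> = circ b2 n" using trivB b2 n by simp
  finally have "lam b3 c0 = lam b2 (lam n c0)" using lam_comp b2c nc c0c by simp
  also have "\<dots> = lam b2 c0" using K_lam nK c0c by simp
  finally show ?thesis using e1 e3 by (simp add: b2_def)
qed

lemma claimP': "a \<in> carrier G \<Longrightarrow> b \<in> B \<Longrightarrow> c0 \<in> C \<Longrightarrow> lam (lam a b) c0 = lam b c0"
proof -
  assume a: "a \<in> carrier G" and b: "b \<in> B" and c0: "c0 \<in> C"
  obtain b1 c1 where bc: "b1 \<in> B" "c1 \<in> C" "a = b1 \<otimes> c1" using car a by auto
  have b1c: "b1 \<in> carrier G" and c1c: "c1 \<in> carrier G" and bcar: "b \<in> carrier G"
    using bc b BG CG by auto
  define c2 where "c2 = lam (ci b1) c1"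
  have c2: "c2 \<in> C" unfolding c2_def using lamC c1c bc b1c by simp
  have c2c: "c2 \<in> carrier G" using c2 CG by auto
  have "a = circ b1 c2" using circ_ci_lam b1c c1c bc by (simp add: c2_def)
  then have "lam a b = lam b1 (lam c2 b)" using lam_comp b1c c2c bcar by simp
  also have "\<dots> = lam c2 b" using lam_trivB bc lamB c2c b by simp
  finally show ?thesis using claimP c2 b c0 by simp
qed

lemma key: "a \<in> carrier G \<Longrightarrow> b \<in> B \<Longrightarrow> lam a b \<otimes> inv b \<in> K"
proof -
  assume a: "a \<in> carrier G" and b: "b \<in> B"
  have bcar: "b \<in> carrier G" using b BG by auto
  have lb: "lam a b \<in> B" using lamB a b .
  have ib: "inv b \<in> B" using subgroup.m_inv_closed[OF subB b] .
  have beta: "lam a b \<otimes> inv b \<in> B" using subgroup.m_closed[OF subB lb ib] .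
  have betac: "lam a b \<otimes> inv b \<in> carrier G" using beta BG by auto
  have eb: "lam a b \<otimes> inv b = circ (lam a b) (inv b)" using trivB lb ib by simp
  { fix y assume "y \<in> carrier G"
    then obtain b0 c0 where bc: "b0 \<in> B" "c0 \<in> C" "y = b0 \<otimes> c0" using car by auto
    have b0c: "b0 \<in> carrier G" and c0c: "c0 \<in> carrier G" using bc BG CG by auto
    have c1: "lam (inv b) c0 \<in> C" using lamC bcar bc by simp
    have "lam (lam a b \<otimes> inv b) c0 = lam (lam a b) (lam (inv b) c0)"
      unfolding eb using lam_comp lb ib BG c0c by (simp add: subsetD)
    also have "\<dots> = lam b (lam (inv b) c0)" using claimP' a b c1 by simp
    also have "\<dots> = lam (circ b (inv b)) c0" using lam_comp bcar c0c by simp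
    also have "\<dots> = c0" using trivB[OF b ib] bcar c0c by simp
    finally have e: "lam (lam a b \<otimes> inv b) c0 = c0" .
    have "lam (lam a b \<otimes> inv b) y = lam (lam a b \<otimes> inv b) b0 \<otimes> lam (lam a b \<otimes> inv b) c0"
      using bc betac b0c c0c lam_mult by simp
    also have "\<dots> = y" using e lam_trivB beta bc by simp
    finally have "lam (lam a b \<otimes> inv b) y = y" . }
  then show ?thesis using betac by (simp add: K_def)
qed


lemma gen_K: "a \<in> carrier G \<Longrightarrow> x \<in> carrier G \<Longrightarrow> sb_star G circ a x \<in> K"
proof -
  assume a: "a \<in> carrier G" and x: "x \<in> carrier G"
  interpret S: SB G circ C B by (rule swap)
  obtain b c where bc: "b \<in> B" "c \<in> C" "x = b \<otimes> c" using car x by auto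
  have bcar: "b \<in> carrier G" and ccar: "c \<in> carrier G" using bc BG CG by auto
  define be where "be = lam a b \<otimes> inv b"
  define ga where "ga = lam a c \<otimes> inv c"
  have beK: "be \<in> K" using key a bc by (simp add: be_def)
  have gaK: "ga \<in> K" using S.key[OF a bc(2)] unfolding ga_def .
  have gaC: "ga \<in> C" unfolding ga_def using subgroup.m_closed[OF subC lamC[OF a bc(2)] subgroup.m_inv_closed[OF subC bc(2)]] .
  define n where "n = inv ga \<otimes> b \<otimes> ga \<otimes> inv b"
  have n: "n \<in> C \<inter> B" unfolding n_def using comm_in[OF nC nB gaC bc(1)] .
  have nK: "n \<in> K" using n N_K by auto
  have gac: "ga \<in> carrier G" using gaC CG by auto
  have lac: "lam a c \<in> carrier G" "lam a b \<in> carrier G" using a bcar ccar by auto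
  have "sb_star G circ a x = lam a x \<otimes> inv x" using a x by (simp add: sb_star_def lam_def m_assoc)
  also have "\<dots> = lam a b \<otimes> lam a c \<otimes> (inv c \<otimes> inv b)" using bc bcar ccar a lam_mult
    by (simp add: inv_mult_group)
  also have "\<dots> = lam a b \<otimes> ga \<otimes> inv b" using bcar ccar lac
    by (simp add: ga_def m_assoc)
  also have "\<dots> = be \<otimes> ga \<otimes> n" using bcar gac lac
    by (simp add: be_def n_def m_assoc cancel1 cancel2)
  finally have "sb_star G circ a x = be \<otimes> ga \<otimes> n" .
  then show ?thesis using subgroup.m_closed[OF K_sub subgroup.m_closed[OF K_sub beK gaK] nK] by simp
qed

end

theorem theorem1p4:
  fixes G :: "('a, 'b) monoid_scheme" and circ :: "'a \<Rightarrow> 'a \<Rightarrow> 'a" and B C :: "'a set"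
  assumes "skew_brace G circ"
    and "sub_skew_brace G circ B" and "sub_skew_brace G circ C"
    and "carrier G = {b \<otimes>\<^bsub>G\<^esub> c | b c. b \<in> B \<and> c \<in> C}"
    and "trivial_on G circ B" and "trivial_on G circ C"
    and "B \<lhd> G" and "C \<lhd> G"
    and "left_ideal G circ B" and "left_ideal G circ C"
  shows "sb_star_set G circ (sb_star_set G circ (carrier G) (carrier G)) (carrier G) = {\<one>\<^bsub>G\<^esub>}"
proof -
  have grp: "group G" using assms(1) by (simp add: skew_brace_def)
  interpret SB G circ B C using assms grp by (intro SB.intro SB_axioms.intro)
  define S1 where "S1 = sb_star_set G circ (carrier G) (carrier G)"
  have S1K: "S1 \<subseteq> K" unfolding S1_def sb_star_set_def
    by (rule generate_subgroup_incl) (use gen_K K_sub in auto)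
  have KG: "K \<subseteq> carrier G" by (auto simp: K_def)
  have gens: "{sb_star G circ s t | s t. s \<in> S1 \<and> t \<in> carrier G} \<subseteq> {\<one>\<^bsub>G\<^esub>}"
  proof clarify
    fix s t assume s: "s \<in> S1" and t: "t \<in> carrier G"
    have sK: "s \<in> K" using s S1K by auto
    have sc: "s \<in> carrier G" using sK KG by auto
    show "sb_star G circ s t = \<one>\<^bsub>G\<^esub>" using K_circ[OF sK t] sc t
      by (simp add: sb_star_def m_assoc)
  qed
  have "sb_star_set G circ S1 (carrier G) \<subseteq> {\<one>\<^bsub>G\<^esub>}" unfolding sb_star_set_def
    by (rule generate_subgroup_incl[OF gens triv_subgroup])
  moreover have "\<one>\<^bsub>G\<^esub> \<in> sb_star_set G circ S1 (carrier G)" unfolding sb_star_set_def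
    by (rule generate.one)
  ultimately show ?thesis unfolding S1_def by blast
qed
end
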